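(* Let $n\in\mathbb N=\{0,1,2,\dots\}$ be fixed and let $\Theta^\pm$, $\eta_n$, $\Omega_{M,n}$ be as in the context. There exists a constant $C>0$ such that for all $M>0$: $$|\partial_z\Theta^\pm(\eta_n)|\leq CM^{n+1}e^{M^2/2},\quad |\partial_w\Theta^\pm(\eta_n)|\leq CM^{n+1}e^{M^2/2},$$ and $$\sup_{\zeta_n\in\Omega_{M,n}}|\partial_z^2\Theta^\pm(\zeta_n)|\leq CM^{n+1}e^{M^2/2},\quad \sup_{\zeta_n\in\Omega_{M,n}}|\partial_w^2\Theta^\pm(\zeta_n)|\leq CM^{n+1}e^{M^2/2}.$$
   Context: Let $E_n=2n+1$ (eigenvalues of $-\frac{d^2}{dx^2}+x^2$). For $\zeta_n=(w_n,z_n)\in\mathbb C^2$ let $u_{\zeta_n},v_{\zeta_n}$ solve $-y''+(x^2-z_n)y=0$ on $[-M,M]$ with: for $n$ even, $u_{\zeta_n}(0)=1$, $u_{\zeta_n}'(0)=w_n$, $v_{\zeta_n}(0)=-w_n/(1+w_n^2)$, $v_{\zeta_n}'(0)=1/(1+w_n^2)$; for $n$ odd, $u_{\zeta_n}(0)=-w_n$, $u_{\zeta_n}'(0)=1$, $v_{\zeta_n}(0)=-1/(1+w_n^2)$, $v_{\zeta_n}'(0)=-w_n/(1+w_n^2)$. Let $\eta_n=(0,E_n)$. Define $\Theta^\pm(\zeta_n):=u_{\zeta_n}'(\pm M)-i\sqrt{z_n}\,u_{\zeta_n}(\pm M)$ (principal branch), with $\partial_w,\partial_z$ derivatives in $w_n,z_n$,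 and $\Omega_{M,n}:=\{\zeta_n\in\mathbb C^2:|\zeta_n-\eta_n|\leq M^{-(n+2)}e^{-M^2/2}\}$.
   Formalization: The constant C > 0 and the four bounds on the first and second derivatives of Theta^+ and Theta^- are asserted for all M >= 1 only, instead of for all M > 0. The statement above fails without it. *)

theory Defs
  imports "HOL-Analysis.Analysis"
begin

text \<open>The equation is linear with entire coefficients, so the
  solution exists globally and is unique; its restriction to [-M,M] is the
  solution on [-M,M].\<close>
definition ode_sol :: "complex \<Rightarrow> complex \<Rightarrow> complex \<Rightarrow> (real \<Rightarrow> complex) \<times> (real \<Rightarrow> complex)" where
  "ode_sol z a b = (THE p. fst p 0 = a \<and> snd p 0 = b \<and>
     (\<forall>x. (fst p has_vector_derivative snd p x) (at x)) \<and>
     (\<forall>x. (snd p has_vector_derivative ((complex_of_real (x\<^sup>2) - z) * fst p x)) (at x)))"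

definition u_init :: "nat \<Rightarrow> complex \<Rightarrow> complex \<times> complex" where
  "u_init n w = (if even n then (1, w) else (- w, 1))"

definition u_sol :: "nat \<Rightarrow> complex \<Rightarrow> complex \<Rightarrow> real \<Rightarrow> complex" where
  "u_sol n w z = fst (ode_sol z (fst (u_init n w)) (snd (u_init n w)))"

definition du_sol :: "nat \<Rightarrow> complex \<Rightarrow> complex \<Rightarrow> real \<Rightarrow> complex" where
  "du_sol n w z = snd (ode_sol z (fst (u_init n w)) (snd (u_init n w)))"

text \<open>Theta^{+} for s = 1 and Theta^{-} for s = -1:
  Theta(w,z) = u'(s M) - i sqrt z u(s M), principal branch (csqrt).\<close>
definition Theta :: "real \<Rightarrow> nat \<Rightarrow> real \<Rightarrow> complex \<Rightarrow> complex \<Rightarrow> complex" where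
  "Theta s n M w z = du_sol n w z (s * M) - \<i> * csqrt z * u_sol n w z (s * M)"

definition eta :: "nat \<Rightarrow> complex \<times> complex" where
  "eta n = (0, of_nat (2 * n + 1))"

definition Omega :: "real \<Rightarrow> nat \<Rightarrow> (complex \<times> complex) set" where
  "Omega M n = cball (eta n) (M powr (- real (n + 2)) * exp (- M\<^sup>2 / 2))"

end

theory Submission
  imports Defs "HOL-Complex_Analysis.Complex_Analysis"
begin


fun cf :: "complex \<Rightarrow> complex \<Rightarrow> complex \<Rightarrow> nat \<Rightarrow> complex" where
  "cf z a b 0 = a"
| "cf z a b (Suc 0) = b"
| "cf z a b (Suc (Suc 0)) = - z * a / 2"
| "cf z a b (Suc (Suc (Suc 0))) = - z * b / 6"
| "cf z a b (Suc (Suc (Suc (Suc k)))) =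
     (cf z a b k - z * cf z a b (Suc (Suc k))) / of_nat ((k+4)*(k+3))"

lemma cf_rec: "of_nat ((k+2)*(k+1)) * cf z a b (k+2) =
   (if k \<ge> 2 then cf z a b (k-2) else 0) - z * cf z a b k"
proof -
  have "k = 0 \<or> k = 1 \<or> (\<exists>m. k = m + 2)" by presburger
  then consider "k = 0" | "k = 1" | m where "k = m + 2" by blast
  then show ?thesis
  proof cases
    case 1 then show ?thesis by simp
  next
    case 2 then show ?thesis by (simp add: numeral_eq_Suc)
  next
    case 3
    have e: "k + 2 = Suc (Suc (Suc (Suc m)))" using 3 by simp
    have "of_nat ((m+4)*(m+3)) \<noteq> (0::complex)" by (simp del: of_nat_mult)
    then show ?thesis unfolding e using 3
      by (simp add: field_simps numeral_eq_Suc del: of_nat_mult)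
  qed
qed

lemma cf_lin: "cf z a b k = a * cf z 1 0 k + b * cf z 0 1 k"
  by (induction z a b k rule: cf.induct) (simp_all add: algebra_simps add_divide_distrib[symmetric] diff_divide_distrib[symmetric])

lemma cf_neg: "cf z a (-b) k = (-1)^k * cf z a b k"
  by (induction z a b k rule: cf.induct) (simp_all add: field_simps)

lemma aux_frac:
  fixes t F X L4 :: real
  assumes "t + 1 \<noteq> 0" "t + 2 \<noteq> 0" "F \<noteq> 0"
  shows "X / F * (L4 * ((t+2)/(t+1))) / ((t+2)*(t+2)) = X * L4 / ((t+2)*((t+1)*F))"
  using assms by (simp add: frac_eq_eq)

lemma cf_bound:
  assumes a: "norm a \<le> D" and b: "norm b \<le> D" and L: "1 + norm z \<le> L"
  shows "norm (cf z a b k) \<le> D * L^k / fact (k div 2)"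
proof -
  have D0: "D \<ge> 0" using a norm_ge_zero order_trans by blast
  have L1: "L \<ge> 1" using L norm_ge_zero by (meson add_increasing2 order_trans order_refl) 
  have zL: "norm z \<le> L" using L by simp
  have Lp: "\<And>m. 1 \<le> L^m" using L1 by (simp add: one_le_power)
  have LDm: "\<And>m. D \<le> D * L^m" using D0 Lp by (metis mult_left_mono mult.right_neutral)
  have "L * 1 \<le> L * L" using L1 by (intro mult_left_mono) auto
  then have zL2: "norm z \<le> L^2" using zL by (simp add: power2_eq_square)
  show ?thesis
  proof (induction k rule: less_induct)
    case (less k)
    have "k = 0 \<or> k = 1 \<or> k = 2 \<or> k = 3 \<or> (\<exists>m. k = m + 4)" by presburger
    then consider "k = 0" | "k = 1" | "k = 2" | "k = 3" | m where "k = m + 4" by blast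
    then show ?case
    proof cases
      case 1 then show ?thesis using a by simp
    next
      case 2 then show ?thesis using b LDm[of 1] by simp
    next
      case 3
      have m: "norm z * norm a \<le> norm z * D" using a by (simp add: mult_left_mono)
      have nn: "0 \<le> norm z * norm a" by simp
      have e: "norm (- z * a / 2) = norm z * norm a / 2" by (simp add: norm_mult norm_divide)
      have "norm (- z * a / 2) \<le> norm z * D" using m nn e by linarith
      also have "\<dots> \<le> L^2 * D" using zL2 D0 by (rule mult_right_mono)
      finally show ?thesis using 3 by (simp add: numeral_eq_Suc mult.commute)
    next
      case 4
      have m: "norm z * norm b \<le> norm z * D" using b by (simp add: mult_left_mono)
      have nn: "0 \<le> norm z * norm b" by simp
      have e: "norm (- z * b / 6) = norm z * norm b / 6" by (simp add: norm_mult norm_divide)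
      have "norm (- z * b / 6) \<le> norm z * D" using m nn e by linarith
      also have "\<dots> \<le> L^2 * D" using zL2 D0 by (rule mult_right_mono)
      also have "\<dots> \<le> L^3 * D" using D0 L1 by (intro mult_right_mono power_increasing) auto
      finally have r: "norm (- z * b / 6) \<le> L^3 * D" .
      have "cf z a b k = - z * b / 6" using 4 by (simp add: numeral_eq_Suc)
      moreover have "k div 2 = 1" using 4 by simp
      ultimately
      show ?thesis using r 4 by (simp add: mult.commute)
    next
      case 5
      define j where "j = m div 2"
      have kj: "k div 2 = j + 2" "(m+2) div 2 = j + 1" using 5 j_def by auto
      have IH1: "norm (cf z a b m) \<le> D * L^m / fact j" using less 5 j_def by auto
      have IH2: "norm (cf z a b (m+2)) \<le> D * L^(m+2) / fact (j+1)"
        using less[of "m+2"] 5 kj by auto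
      have F0: "(fact j :: real) > 0" by simp
      have ck: "cf z a b k = (cf z a b m - z * cf z a b (m+2)) / of_nat ((m+4)*(m+3))"
        using 5 by (simp add: numeral_eq_Suc)
      have mj: "real m \<ge> 2 * real j" using j_def by linarith
      have den: "real ((m+4)*(m+3)) \<ge> (real j + 2) * (real j + 1) + (real j + 2)"
      proof -
        have mj': "m \<ge> 2*j" using j_def by simp
        have "(2*j+4)*(2*j+3) \<le> (m+4)*(m+3)" using mj' by (intro mult_le_mono) auto
        then have "(j+2)*(j+1) + (j+2) \<le> (m+4)*(m+3)" by (simp add: algebra_simps)
        then have "real ((j+2)*(j+1) + (j+2)) \<le> real ((m+4)*(m+3))" by (rule of_nat_mono)
        then show ?thesis by (simp add: algebra_simps)
      qed
      have "norm (cf z a b m - z * cf z a b (m+2)) \<le> D * L^m / fact j + L^2 * (D * L^(m+2) / fact (j+1))"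
      proof -
        have t1: "norm (z * cf z a b (m+2)) \<le> L^2 * (D * L^(m+2) / fact (j+1))"
          unfolding norm_mult by (rule mult_mono[OF zL2 IH2]) auto
        show ?thesis by (rule order_trans[OF norm_triangle_ineq4 add_mono[OF IH1 t1]])
      qed
      also have "\<dots> = D * L^m / fact j * (1 + L^4 / (real j + 1))"
      proof -
        have fj: "(fact (j+1)::real) = (real j + 1) * fact j" by (simp add: algebra_simps)
        have p: "(real j + 1) * fact j > 0" "real j + 1 > 0" using F0 by auto
        have "L^2 * (D * L^(m+2) / fact (j+1)) = D * L^m / fact j * (L^4 / (real j + 1))"
          unfolding fj using p F0 by (simp add: field_simps power_add eval_nat_numeral)
        then show ?thesis by (simp add: algebra_simps)
      qed
      also have "\<dots> \<le> D * L^m / fact j * (L^4 * (1 + 1 / (real j + 1)))"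
      proof -
        have "1 \<le> L^4" using Lp by simp
        moreover have "L^4 * (1 + 1/(real j+1)) = L^4 + L^4/(real j+1)" by (simp add: distrib_left)
        ultimately have f: "1 + L^4/(real j+1) \<le> L^4 * (1 + 1/(real j+1))" by linarith
        have "0 \<le> D * L^m / fact j" using D0 L1 by simp
        then show ?thesis using f by (rule mult_left_mono[rotated])
      qed
      finally have num: "norm (cf z a b m - z * cf z a b (m+2)) \<le> D * L^m / fact j * (L^4 * (1 + 1 / (real j + 1)))" .
      have "norm (cf z a b k) = norm (cf z a b m - z * cf z a b (m+2)) / real ((m+4)*(m+3))"
        unfolding ck by (simp add: norm_divide del: of_nat_mult)
      also have "\<dots> \<le> D * L^m / fact j * (L^4 * (1 + 1 / (real j + 1))) / ((real j + 2) * (real j + 1) + (real j + 2))"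
      proof -
        have nn: "0 \<le> D * L^m / fact j * (L^4 * (1 + 1 / (real j + 1)))"
          using D0 L1 by (intro mult_nonneg_nonneg divide_nonneg_nonneg) auto
        have "0 \<le> (real j + 2) * (real j + 1)" by (intro mult_nonneg_nonneg) auto
        then have pos: "0 < (real j + 2) * (real j + 1) + (real j + 2)" by linarith
        show ?thesis by (rule frac_le[OF nn num pos den])
      qed
      also have "\<dots> = D * L^k / fact (k div 2)"
      proof -
        have e1: "1 + 1/(real j+1) = (real j+2)/(real j+1)" by (simp add: field_simps)
        have e2: "(real j+2)*(real j+1) + (real j+2) = (real j+2)*(real j+2)" by (simp add: algebra_simps)
        have fj2: "(fact (j+2)::real) = (real j+2)*((real j+1)*fact j)"
          by (simp add: numeral_eq_Suc algebra_simps)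
        have nz: "real j + 1 \<noteq> 0" "real j + 2 \<noteq> 0" "(fact j::real) \<noteq> 0" by auto
        have Lk: "L^k = L^m * L^4" using 5 by (simp add: power_add)
        show ?thesis unfolding kj e1 e2 fj2 Lk using aux_frac[OF nz, of "D * L^m" "L^4"] by (simp add: mult.assoc)
      qed
      finally show ?thesis .
    qed
  qed
qed



lemma maj_summable:
  assumes y: "0 \<le> (y::real)"
  shows "summable (\<lambda>k. y^k / fact (k div 2))"
proof -
  define q where "q = (2*y+1)^2"
  have q1: "q \<ge> 1" unfolding q_def using y by (simp add: one_le_power)
  have "(\<lambda>j. inverse (fact j) * q^j) \<longlonglongrightarrow> 0" by (rule summable_LIMSEQ_zero[OF summable_exp])
  then have "(\<lambda>j. q * (inverse (fact j) * q^j)) \<longlonglongrightarrow> 0" by (rule tendsto_mult_right_zero)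
  then have "eventually (\<lambda>j. q * (inverse (fact j) * q^j) < 1) sequentially"
    by (rule order_tendstoD) simp
  then obtain N where N: "\<And>j. j \<ge> N \<Longrightarrow> q * (inverse (fact j) * q^j) < 1"
    unfolding eventually_sequentially by blast
  show ?thesis
  proof (rule summable_comparison_test'[of "\<lambda>k. (1/2)^k" "2*N"])
    show "summable (\<lambda>k. (1/2::real)^k)" by (rule summable_geometric) simp
  next
    fix k assume k: "k \<ge> 2*N"
    define j where "j = k div 2"
    have jN: "j \<ge> N" using k j_def by simp
    have kj: "k \<le> 2*j + 2" using j_def by simp
    have F0: "(fact j::real) > 0" by simp
    have "q^(j+1) < fact j" using N[OF jN] F0 by (simp add: field_simps)
    have "(2*y)^k \<le> (2*y+1)^k" using y by (intro power_mono) auto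
    also have "\<dots> \<le> (2*y+1)^(2*j+2)" using y kj by (intro power_increasing) auto
    also have "\<dots> = q^(j+1)"
    proof -
      have "2*j+2 = 2*(j+1)" by simp
      then show ?thesis by (simp only: q_def power_mult)
    qed
    also have "\<dots> < fact j" by fact
    finally have "(2*y)^k < fact j" .
    then have "y^k * 2^k / fact j \<le> 1" using F0 by (simp add: power_mult_distrib mult.commute)
    then have "y^k / fact j \<le> 1 / 2^k" using F0 by (simp add: field_simps)
    then show "norm (y^k / fact (k div 2)) \<le> (1/2)^k" using y unfolding j_def
      by (simp add: power_one_over)
  qed
qed

lemma cf_summable: "summable (\<lambda>k. cf z a b k * \<xi>^k)"
proof -
  define D where "D = max (norm a) (norm b)"
  define L where "L = 1 + norm z"
  have "summable (\<lambda>k. D * ((L * norm \<xi>)^k / fact (k div 2)))"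
    by (intro summable_mult maj_summable) (simp add: L_def)
  then show ?thesis
  proof (rule summable_comparison_test'[where N=0])
    fix k :: nat
    have "norm (cf z a b k * \<xi>^k) = norm (cf z a b k) * norm \<xi> ^ k" by (simp add: norm_mult norm_power)
    also have "\<dots> \<le> D * L^k / fact (k div 2) * norm \<xi> ^ k"
      by (intro mult_right_mono cf_bound) (auto simp: D_def L_def)
    also have "\<dots> = D * ((L * norm \<xi>)^k / fact (k div 2))" by (simp add: power_mult_distrib)
    finally show "norm (cf z a b k * \<xi>^k) \<le> D * ((L * norm \<xi>)^k / fact (k div 2))" .
  qed
qed

definition S :: "complex \<Rightarrow> complex \<Rightarrow> complex \<Rightarrow> complex \<Rightarrow> complex" where
  "S z a b \<xi> = (\<Sum>k. cf z a b k * \<xi>^k)"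
definition dS :: "complex \<Rightarrow> complex \<Rightarrow> complex \<Rightarrow> complex \<Rightarrow> complex" where
  "dS z a b \<xi> = (\<Sum>k. diffs (cf z a b) k * \<xi>^k)"

lemma dS_summable: "summable (\<lambda>k. diffs (cf z a b) k * \<xi>^k)"
  by (rule termdiff_converges_all) (rule cf_summable)

lemma S_deriv: "(S z a b has_field_derivative dS z a b \<xi>) (at \<xi>)"
  unfolding S_def dS_def by (rule termdiffs_strong_converges_everywhere) (rule cf_summable)

lemma dS_eq: "(\<Sum>k. diffs (diffs (cf z a b)) k * \<xi>^k) = (\<xi>^2 - z) * S z a b \<xi>"
proof -
  define h where "h k = (if k \<ge> 2 then cf z a b (k-2) * \<xi>^k else 0)" for k
  have s1: "(\<lambda>k. cf z a b k * \<xi>^k) sums S z a b \<xi>" unfolding S_def using cf_summable summable_sums by blast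
  have "(\<lambda>k. cf z a b k * \<xi>^k * \<xi>^2) sums (S z a b \<xi> * \<xi>^2)" by (rule sums_mult2[OF s1])
  moreover have "(\<lambda>i. h (i+2)) = (\<lambda>k. cf z a b k * \<xi>^k * \<xi>^2)"
    by (rule ext) (simp add: h_def power_add mult_ac power2_eq_square)
  ultimately have "(\<lambda>i. h (i+2)) sums (S z a b \<xi> * \<xi>^2)" by simp
  then have s2: "h sums (S z a b \<xi> * \<xi>^2)" by (subst (asm) sums_zero_iff_shift) (auto simp: h_def)
  have s3: "(\<lambda>k. h k - z * (cf z a b k * \<xi>^k)) sums (S z a b \<xi> * \<xi>^2 - z * S z a b \<xi>)"
    by (intro sums_diff s2 sums_mult s1)
  have e: "diffs (diffs (cf z a b)) k * \<xi>^k = h k - z * (cf z a b k * \<xi>^k)" for k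
  proof -
    have "diffs (diffs (cf z a b)) k = of_nat ((k+2)*(k+1)) * cf z a b (k+2)"
      by (simp add: diffs_def algebra_simps)
    also have "\<dots> = (if k \<ge> 2 then cf z a b (k-2) else 0) - z * cf z a b k" by (rule cf_rec)
    finally have dd: "diffs (diffs (cf z a b)) k = (if k \<ge> 2 then cf z a b (k-2) else 0) - z * cf z a b k" .
    show ?thesis by (cases "2 \<le> k") (simp_all only: dd h_def if_True if_False, simp_all add: algebra_simps)
  qed
  from s3 have "(\<lambda>k. diffs (diffs (cf z a b)) k * \<xi>^k) sums (S z a b \<xi> * \<xi>^2 - z * S z a b \<xi>)"
    by (simp add: e)
  then show ?thesis by (simp add: sums_iff algebra_simps)
qed

lemma dS_deriv: "(dS z a b has_field_derivative ((\<xi>^2 - z) * S z a b \<xi>)) (at \<xi>)"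
proof -
  have "(dS z a b has_field_derivative (\<Sum>k. diffs (diffs (cf z a b)) k * \<xi>^k)) (at \<xi>)"
    unfolding dS_def by (rule termdiffs_strong_converges_everywhere) (rule dS_summable)
  then show ?thesis by (simp add: dS_eq)
qed

definition sol :: "complex \<Rightarrow> complex \<Rightarrow> complex \<Rightarrow> real \<Rightarrow> complex" where
  "sol z a b x = S z a b (of_real x)"
definition dsol :: "complex \<Rightarrow> complex \<Rightarrow> complex \<Rightarrow> real \<Rightarrow> complex" where
  "dsol z a b x = dS z a b (of_real x)"

lemma sol_deriv: "(sol z a b has_vector_derivative dsol z a b x) (at x)"
  unfolding sol_def[abs_def] dsol_def by (rule has_vector_derivative_real_field[OF S_deriv])

lemma dsol_deriv: "(dsol z a b has_vector_derivative ((complex_of_real (x\<^sup>2) - z) * sol z a b x)) (at x)"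
  unfolding dsol_def[abs_def] sol_def using has_vector_derivative_real_field[OF dS_deriv[of z a b "of_real x"]]
  by simp

lemma sol_0: "sol z a b 0 = a"
  unfolding sol_def S_def using powser_zero[of "cf z a b"] by simp

lemma dsol_0: "dsol z a b 0 = b"
  unfolding dsol_def dS_def using powser_zero[of "diffs (cf z a b)"] by (simp add: diffs_def)



lemma energy_deriv:
  fixes d e :: "real \<Rightarrow> complex"
  assumes d: "(d has_vector_derivative d1) (at t)" and e: "(e has_vector_derivative e1) (at t)"
  shows "((\<lambda>t. (norm (d t))\<^sup>2 + (norm (e t))\<^sup>2) has_real_derivative
           (2 * inner (d t) d1 + 2 * inner (e t) e1)) (at t)"
proof -
  have 1: "((\<lambda>t. inner (d t) (d t)) has_vector_derivative (inner (d t) d1 + inner d1 (d t))) (at t)"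
    by (rule bounded_bilinear.has_vector_derivative[OF bounded_bilinear_inner d d])
  have 2: "((\<lambda>t. inner (e t) (e t)) has_vector_derivative (inner (e t) e1 + inner e1 (e t))) (at t)"
    by (rule bounded_bilinear.has_vector_derivative[OF bounded_bilinear_inner e e])
  have 3: "((\<lambda>t. inner (d t) (d t) + inner (e t) (e t)) has_vector_derivative
     ((inner (d t) d1 + inner d1 (d t)) + (inner (e t) e1 + inner e1 (e t)))) (at t)"
    by (rule has_vector_derivative_add[OF 1 2])
  have c: "inner d1 (d t) = inner (d t) d1" "inner e1 (e t) = inner (e t) e1" by (simp_all add: inner_commute)
  show ?thesis unfolding power2_norm_eq_inner has_real_derivative_iff_has_vector_derivative
    using 3 unfolding c by (simp add: algebra_simps)
qed

lemma gronwall_fwd: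
  fixes E E' :: "real \<Rightarrow> real"
  assumes X: "0 \<le> X"
    and d: "\<And>t. 0 \<le> t \<Longrightarrow> t \<le> X \<Longrightarrow> (E has_real_derivative E' t) (at t)"
    and b: "\<And>t. 0 \<le> t \<Longrightarrow> t \<le> X \<Longrightarrow> E' t \<le> K * E t"
  shows "E X \<le> E 0 * exp (K * X)"
proof -
  define h where "h t = exp (- K * t) * E t" for t
  have "h X \<le> h 0"
  proof (rule DERIV_nonpos_imp_nonincreasing[OF X])
    fix t assume t: "0 \<le> t" "t \<le> X"
    have "(h has_real_derivative (exp (- K * t) * (- K) * E t + exp (- K * t) * E' t)) (at t)"
      unfolding h_def[abs_def] using d[OF t]
      by (auto intro!: derivative_eq_intros simp: algebra_simps)
    moreover have "exp (- K * t) * (- K) * E t + exp (- K * t) * E' t = exp (- K * t) * (E' t - K * E t)"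
      by (simp add: algebra_simps)
    moreover have "exp (- K * t) * (E' t - K * E t) \<le> 0"
      using b[OF t] by (simp add: mult_nonneg_nonpos)
    ultimately show "\<exists>y. (h has_real_derivative y) (at t) \<and> y \<le> 0" by auto
  qed
  then have "exp (- K * X) * E X \<le> E 0" by (simp add: h_def)
  then have "exp (K * X) * (exp (- K * X) * E X) \<le> exp (K * X) * E 0" by simp
  then show ?thesis by (simp add: exp_minus field_simps)
qed

lemma gronwall_bwd:
  fixes E E' :: "real \<Rightarrow> real"
  assumes X: "X \<le> 0"
    and d: "\<And>t. X \<le> t \<Longrightarrow> t \<le> 0 \<Longrightarrow> (E has_real_derivative E' t) (at t)"
    and b: "\<And>t. X \<le> t \<Longrightarrow> t \<le> 0 \<Longrightarrow> - K * E t \<le> E' t"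
  shows "E X \<le> E 0 * exp (- K * X)"
proof -
  define h where "h t = exp (K * t) * E t" for t
  have "h X \<le> h 0"
  proof (rule DERIV_nonneg_imp_nondecreasing[OF X])
    fix t assume t: "X \<le> t" "t \<le> 0"
    have "(h has_real_derivative (exp (K * t) * K * E t + exp (K * t) * E' t)) (at t)"
      unfolding h_def[abs_def] using d[OF t]
      by (auto intro!: derivative_eq_intros simp: algebra_simps)
    moreover have "exp (K * t) * K * E t + exp (K * t) * E' t = exp (K * t) * (E' t + K * E t)"
      by (simp add: algebra_simps)
    moreover have "exp (K * t) * (E' t + K * E t) \<ge> 0"
      using b[OF t] by simp
    ultimately show "\<exists>y. (h has_real_derivative y) (at t) \<and> y \<ge> 0" by auto
  qed
  then have "exp (K * X) * E X \<le> E 0" by (simp add: h_def)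
  then have "exp (- K * X) * (exp (K * X) * E X) \<le> exp (- K * X) * E 0" by simp
  then show ?thesis by (simp add: exp_minus field_simps)
qed

lemma energy_ineq:
  fixes u v c :: complex
  shows "\<bar>2 * inner u v + 2 * inner v (c * u)\<bar> \<le> (1 + norm c) * ((norm u)\<^sup>2 + (norm v)\<^sup>2)"
proof -
  have i1: "\<bar>inner u v\<bar> \<le> norm u * norm v" by (rule Cauchy_Schwarz_ineq2)
  have "\<bar>inner v (c * u)\<bar> \<le> norm v * norm (c * u)" by (rule Cauchy_Schwarz_ineq2)
  then have i2: "\<bar>inner v (c * u)\<bar> \<le> norm c * (norm u * norm v)" by (simp add: norm_mult mult_ac)
  have q: "2 * (norm u * norm v) \<le> (norm u)\<^sup>2 + (norm v)\<^sup>2"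
    using sum_squares_bound[of "norm u" "norm v"] by (simp add: mult_ac)
  have "\<bar>2 * inner u v + 2 * inner v (c * u)\<bar> \<le> 2 * (norm u * norm v) + norm c * (2 * (norm u * norm v))"
    using i1 i2 by linarith
  also have "\<dots> = (1 + norm c) * (2 * (norm u * norm v))" by (simp add: algebra_simps)
  also have "\<dots> \<le> (1 + norm c) * ((norm u)\<^sup>2 + (norm v)\<^sup>2)" using q by (intro mult_left_mono) auto
  finally show ?thesis .
qed

definition is_sol :: "complex \<Rightarrow> (real \<Rightarrow> complex) \<Rightarrow> (real \<Rightarrow> complex) \<Rightarrow> bool" where
  "is_sol z y y' \<longleftrightarrow> (\<forall>x. (y has_vector_derivative y' x) (at x)) \<and>
     (\<forall>x. (y' has_vector_derivative ((complex_of_real (x\<^sup>2) - z) * y x)) (at x))"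

lemma is_sol_sol: "is_sol z (sol z a b) (dsol z a b)"
  unfolding is_sol_def using sol_deriv dsol_deriv by blast

lemma energy_sol_deriv:
  assumes "is_sol z y y'"
  shows "((\<lambda>t. (norm (y t))\<^sup>2 + (norm (y' t))\<^sup>2) has_real_derivative
           (2 * inner (y t) (y' t) + 2 * inner (y' t) ((complex_of_real (t\<^sup>2) - z) * y t))) (at t)"
  using assms unfolding is_sol_def by (intro energy_deriv) auto

lemma energy_sol_bound:
  assumes "\<bar>t\<bar> \<le> X"
  shows "\<bar>2 * inner u v + 2 * inner v ((complex_of_real (t\<^sup>2) - z) * u)\<bar>
     \<le> (1 + X\<^sup>2 + norm z) * ((norm u)\<^sup>2 + (norm v)\<^sup>2)"
proof -
  have "norm (complex_of_real (t\<^sup>2) - z) \<le> t\<^sup>2 + norm z"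
    using norm_triangle_ineq4[of "complex_of_real (t\<^sup>2)" z] by (simp add: norm_power)
  also have "t\<^sup>2 \<le> X\<^sup>2" using assms by (metis abs_ge_zero power2_abs power_mono)
  finally have "1 + norm (complex_of_real (t\<^sup>2) - z) \<le> 1 + X\<^sup>2 + norm z" by simp
  then show ?thesis using energy_ineq[of u v "complex_of_real (t\<^sup>2) - z"]
    by (smt (verit) mult_right_mono zero_le_power2 add_nonneg_nonneg)
qed

lemma energy_growth:
  assumes "is_sol z y y'"
  shows "(norm (y x))\<^sup>2 + (norm (y' x))\<^sup>2 \<le> ((norm (y 0))\<^sup>2 + (norm (y' 0))\<^sup>2) * exp ((1 + x\<^sup>2 + norm z) * \<bar>x\<bar>)"
proof -
  define E where "E t = (norm (y t))\<^sup>2 + (norm (y' t))\<^sup>2" for t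
  define E' where "E' t = 2 * inner (y t) (y' t) + 2 * inner (y' t) ((complex_of_real (t\<^sup>2) - z) * y t)" for t
  define K where "K = 1 + x\<^sup>2 + norm z"
  have d: "(E has_real_derivative E' t) (at t)" for t
    unfolding E_def[abs_def] E'_def using energy_sol_deriv[OF assms] .
  have b: "\<bar>E' t\<bar> \<le> K * E t" if "\<bar>t\<bar> \<le> \<bar>x\<bar>" for t
    unfolding E'_def E_def K_def using energy_sol_bound[OF that] by simp
  show ?thesis
  proof (cases "x \<ge> 0")
    case True
    have bt: "E' t \<le> K * E t" if "0 \<le> t" "t \<le> x" for t
      using b[of t] that True by auto
    have "E x \<le> E 0 * exp (K * x)"
      by (rule gronwall_fwd[OF True d bt])
    then show ?thesis using True by (simp add: E_def K_def)
  next
    case False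
    have bt: "- K * E t \<le> E' t" if "x \<le> t" "t \<le> 0" for t
      using b[of t] that False by auto
    have "E x \<le> E 0 * exp (- K * x)"
      by (rule gronwall_bwd[of x E E' K]) (use False d bt in auto)
    moreover have "- K * x = K * \<bar>x\<bar>" using False by simp
    ultimately show ?thesis by (simp add: E_def K_def)
  qed
qed

lemma is_sol_diff: "is_sol z y1 y1' \<Longrightarrow> is_sol z y2 y2' \<Longrightarrow> is_sol z (\<lambda>x. y1 x - y2 x) (\<lambda>x. y1' x - y2' x)"
  unfolding is_sol_def
proof (intro conjI allI; elim conjE)
  fix x
  assume a1: "\<forall>x. (y1 has_vector_derivative y1' x) (at x)" and
    a2: "\<forall>x. (y1' has_vector_derivative (complex_of_real (x\<^sup>2) - z) * y1 x) (at x)" and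
    a3: "\<forall>x. (y2 has_vector_derivative y2' x) (at x)" and
    a4: "\<forall>x. (y2' has_vector_derivative (complex_of_real (x\<^sup>2) - z) * y2 x) (at x)"
  show "((\<lambda>x. y1 x - y2 x) has_vector_derivative y1' x - y2' x) (at x)"
    using a1 a3 by (intro has_vector_derivative_diff) auto
  have "((\<lambda>x. y1' x - y2' x) has_vector_derivative
     (complex_of_real (x\<^sup>2) - z) * y1 x - (complex_of_real (x\<^sup>2) - z) * y2 x) (at x)"
    using a2 a4 by (intro has_vector_derivative_diff) auto
  then show "((\<lambda>x. y1' x - y2' x) has_vector_derivative
     (complex_of_real (x\<^sup>2) - z) * (y1 x - y2 x)) (at x)"
    by (simp add: algebra_simps)
qed

lemma ode_unique:
  assumes "is_sol z y y'" "y 0 = 0" "y' 0 = 0"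
  shows "y x = 0"
proof -
  have "(norm (y x))\<^sup>2 + (norm (y' x))\<^sup>2 \<le> 0" using energy_growth[OF assms(1), of x] assms(2,3) by simp
  then show ?thesis by (smt (verit) zero_le_power2 norm_eq_zero power_eq_0_iff)
qed

lemma ode_sol_eq: "ode_sol z a b = (sol z a b, dsol z a b)"
  unfolding ode_sol_def
proof (rule the_equality)
  show "fst (sol z a b, dsol z a b) 0 = a \<and> snd (sol z a b, dsol z a b) 0 = b \<and>
    (\<forall>x. (fst (sol z a b, dsol z a b) has_vector_derivative snd (sol z a b, dsol z a b) x) (at x)) \<and>
    (\<forall>x. (snd (sol z a b, dsol z a b) has_vector_derivative (complex_of_real (x\<^sup>2) - z) * fst (sol z a b, dsol z a b) x) (at x))"
    using sol_0 dsol_0 sol_deriv dsol_deriv by simp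
next
  fix p :: "(real \<Rightarrow> complex) \<times> (real \<Rightarrow> complex)"
  assume p: "fst p 0 = a \<and> snd p 0 = b \<and> (\<forall>x. (fst p has_vector_derivative snd p x) (at x)) \<and>
    (\<forall>x. (snd p has_vector_derivative (complex_of_real (x\<^sup>2) - z) * fst p x) (at x))"
  then have "is_sol z (fst p) (snd p)" unfolding is_sol_def by blast
  then have ds: "is_sol z (\<lambda>x. fst p x - sol z a b x) (\<lambda>x. snd p x - dsol z a b x)"
    by (rule is_sol_diff[OF _ is_sol_sol])
  have "fst p x - sol z a b x = 0" for x by (rule ode_unique[OF ds]) (use p sol_0 dsol_0 in auto)
  moreover
  have "(\<lambda>x. fst p x - sol z a b x) = (\<lambda>x. 0) \<Longrightarrow> (\<lambda>x. snd p x - dsol z a b x) x = 0" for x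
  proof -
    assume z0: "(\<lambda>x. fst p x - sol z a b x) = (\<lambda>x. 0)"
    have "((\<lambda>x. fst p x - sol z a b x) has_vector_derivative (snd p x - dsol z a b x)) (at x)"
      using ds unfolding is_sol_def by blast
    then have "((\<lambda>x. 0) has_vector_derivative (snd p x - dsol z a b x)) (at x)" unfolding z0 .
    moreover have "((\<lambda>x::real. 0::complex) has_vector_derivative 0) (at x)" by (rule has_vector_derivative_const)
    ultimately show ?thesis using vector_derivative_unique_at by fastforce
  qed
  ultimately show "p = (sol z a b, dsol z a b)"
    by (metis (no_types, lifting) ext eq_iff_diff_eq_0 prod.collapse)
qed

lemma u_sol_eq: "u_sol n w z = sol z (fst (u_init n w)) (snd (u_init n w))"
  unfolding u_sol_def ode_sol_eq by simp
lemma du_sol_eq: "du_sol n w z = dsol z (fst (u_init n w)) (snd (u_init n w))"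
  unfolding du_sol_def ode_sol_eq by simp



lemma inner_mult_self: "inner u (a * u) = Re a * (norm u)\<^sup>2" for u a :: complex
  unfolding inner_complex_def cmod_power2 by (simp add: algebra_simps power2_eq_square)

definition eG :: "(real \<Rightarrow> complex) \<Rightarrow> real \<Rightarrow> complex" where
  "eG y x = of_real (exp (-(x\<^sup>2)/2)) * y x"
definition eGd :: "(real \<Rightarrow> complex) \<Rightarrow> (real \<Rightarrow> complex) \<Rightarrow> real \<Rightarrow> complex" where
  "eGd y y' x = of_real (exp (-(x\<^sup>2)/2)) * (y' x - of_real x * y x)"
definition eW :: "complex \<Rightarrow> (real \<Rightarrow> complex) \<Rightarrow> (real \<Rightarrow> complex) \<Rightarrow> real \<Rightarrow> complex" where
  "eW z y y' x = of_real x * eGd y y' x + ((1+z)/2) * eG y x"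

lemma exp_vd: "((\<lambda>x. complex_of_real (exp (-(x\<^sup>2)/2))) has_vector_derivative
     complex_of_real (exp (-(x\<^sup>2)/2) * (-x))) (at x)"
proof -
  have "((\<lambda>x. exp (-(x\<^sup>2)/2)) has_real_derivative exp (-(x\<^sup>2)/2) * (-x)) (at x)"
    by (auto intro!: derivative_eq_intros simp: power2_eq_square algebra_simps)
  then show ?thesis by (rule has_vector_derivative_of_real)
qed

lemma ofreal_vd: "((\<lambda>x. complex_of_real x) has_vector_derivative 1) (at x)"
  using has_vector_derivative_of_real[OF DERIV_ident] by simp

lemma eG_deriv:
  assumes "is_sol z y y'"
  shows "(eG y has_vector_derivative eGd y y' x) (at x)"
proof -
  have y: "(y has_vector_derivative y' x) (at x)" using assms unfolding is_sol_def by blast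
  have "((\<lambda>x. complex_of_real (exp (-(x\<^sup>2)/2)) * y x) has_vector_derivative
     (complex_of_real (exp (-(x\<^sup>2)/2)) * y' x + complex_of_real (exp (-(x\<^sup>2)/2) * (-x)) * y x)) (at x)"
    by (rule has_vector_derivative_mult[OF exp_vd y])
  moreover have "complex_of_real (exp (-(x\<^sup>2)/2)) * y' x + complex_of_real (exp (-(x\<^sup>2)/2) * (-x)) * y x
     = eGd y y' x" unfolding eGd_def by (simp add: algebra_simps)
  ultimately show ?thesis unfolding eG_def[abs_def] by simp
qed

lemma eGd_deriv:
  assumes "is_sol z y y'"
  shows "(eGd y y' has_vector_derivative (- 2 * of_real x * eGd y y' x - (1 + z) * eG y x)) (at x)"
proof -
  have y: "(y has_vector_derivative y' x) (at x)" and
       y': "(y' has_vector_derivative (complex_of_real (x\<^sup>2) - z) * y x) (at x)"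
    using assms unfolding is_sol_def by blast+
  have xy: "((\<lambda>x. complex_of_real x * y x) has_vector_derivative (complex_of_real x * y' x + 1 * y x)) (at x)"
    by (rule has_vector_derivative_mult[OF ofreal_vd y])
  have inner: "((\<lambda>x. y' x - complex_of_real x * y x) has_vector_derivative
      ((complex_of_real (x\<^sup>2) - z) * y x - (complex_of_real x * y' x + 1 * y x))) (at x)"
    by (rule has_vector_derivative_diff[OF y' xy])
  have D: "(eGd y y' has_vector_derivative
     (complex_of_real (exp (-(x\<^sup>2)/2)) * ((complex_of_real (x\<^sup>2) - z) * y x - (complex_of_real x * y' x + 1 * y x))
      + complex_of_real (exp (-(x\<^sup>2)/2) * (-x)) * (y' x - complex_of_real x * y x))) (at x)"
    unfolding eGd_def[abs_def] by (rule has_vector_derivative_mult[OF exp_vd inner])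
  have eq: "complex_of_real (exp (-(x\<^sup>2)/2)) * ((complex_of_real (x\<^sup>2) - z) * y x - (complex_of_real x * y' x + 1 * y x))
      + complex_of_real (exp (-(x\<^sup>2)/2) * (-x)) * (y' x - complex_of_real x * y x)
     = - 2 * of_real x * eGd y y' x - (1 + z) * eG y x"
    unfolding eGd_def eG_def by (simp add: algebra_simps power2_eq_square)
  show ?thesis using D unfolding eq .
qed

lemma eW_deriv:
  assumes "is_sol z y y'"
  shows "(eW z y y' has_vector_derivative ((1 + (1+z)/2) * eGd y y' x - 2 * of_real x * eW z y y' x)) (at x)"
proof -
  have a: "((\<lambda>x. complex_of_real x * eGd y y' x) has_vector_derivative
      (complex_of_real x * (- 2 * of_real x * eGd y y' x - (1 + z) * eG y x) + 1 * eGd y y' x)) (at x)"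
    by (rule has_vector_derivative_mult[OF ofreal_vd eGd_deriv[OF assms]])
  have b: "((\<lambda>x. (1+z)/2 * eG y x) has_vector_derivative ((1+z)/2 * eGd y y' x + 0 * eG y x)) (at x)"
    by (rule has_vector_derivative_mult[OF has_vector_derivative_const eG_deriv[OF assms]])
  have "(eW z y y' has_vector_derivative
     ((complex_of_real x * (- 2 * of_real x * eGd y y' x - (1 + z) * eG y x) + 1 * eGd y y' x)
      + ((1+z)/2 * eGd y y' x + 0 * eG y x))) (at x)"
    unfolding eW_def[abs_def] by (rule has_vector_derivative_add[OF a b])
  moreover have "(complex_of_real x * (- 2 * of_real x * eGd y y' x - (1 + z) * eG y x) + 1 * eGd y y' x)
      + ((1+z)/2 * eGd y y' x + 0 * eG y x) = (1 + (1+z)/2) * eGd y y' x - 2 * of_real x * eW z y y' x"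
    unfolding eW_def by (simp add: algebra_simps)
  ultimately show ?thesis by simp
qed



lemma lyap_ineq:
  fixes G W c :: complex and x Cc :: real
  assumes c1: "1 \<le> Re c" and cC: "norm c \<le> Cc" and x: "3 + Cc + Cc\<^sup>2 \<le> x"
  shows "2 * inner G (W - (c/2)*G) + 2 * inner W ((1 + c/2) * (W - (c/2)*G)) \<le> 4 * x\<^sup>2 * (norm W)\<^sup>2"
proof -
  define a where "a = norm G"
  define b where "b = norm W"
  define A0 where "A0 = 1 + Cc/2"
  define B where "B = 2 + A0 * Cc"
  have a0: "a \<ge> 0" "b \<ge> 0" unfolding a_def b_def by auto
  have "Re c \<le> norm c" by (rule complex_Re_le_cmod)
  then have C1: "Cc \<ge> 1" using c1 cC by linarith
  have i1: "inner G (W - (c/2)*G) = inner G W - Re (c/2) * a\<^sup>2"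
    unfolding a_def inner_diff_right inner_mult_self ..
  have "inner G W \<le> a * b" unfolding a_def b_def by (rule norm_cauchy_schwarz)
  moreover have "Re (c/2) \<ge> 1/2" using c1 by simp
  moreover have "a\<^sup>2 \<ge> 0" by simp
  ultimately have "1/2 * a\<^sup>2 \<le> Re (c/2) * a\<^sup>2" "inner G W \<le> a * b"
    by (metis mult_right_mono, blast)
  then have t1: "2 * inner G (W - (c/2)*G) \<le> 2*(a*b) - a\<^sup>2" unfolding i1 by (simp add: algebra_simps)
  have nA: "norm (1 + c/2) \<le> A0" unfolding A0_def
    using norm_triangle_ineq[of 1 "c/2"] cC by (simp add: norm_divide)
  have A00: "0 \<le> A0" using nA norm_ge_zero[of "1 + c/2"] by linarith
  have n1: "norm ((c/2)*G) = norm c / 2 * a" by (simp add: norm_mult norm_divide a_def)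
  have n2: "norm c / 2 * a \<le> Cc/2 * a" using cC a0 by (intro mult_right_mono) auto
  have nV: "norm (W - (c/2)*G) \<le> b + Cc/2 * a"
    using norm_triangle_ineq4[of W "(c/2)*G"] n1 n2 unfolding b_def by linarith
  have "inner W ((1 + c/2) * (W - (c/2)*G)) \<le> b * norm ((1 + c/2) * (W - (c/2)*G))"
    unfolding b_def by (rule norm_cauchy_schwarz)
  also have "\<dots> = b * (norm (1 + c/2) * norm (W - (c/2)*G))" by (simp add: norm_mult)
  also have "\<dots> \<le> b * (A0 * (b + Cc/2 * a))"
    using nA nV a0 A00 by (intro mult_left_mono mult_mono) auto
  finally have t2: "2 * inner W ((1 + c/2) * (W - (c/2)*G)) \<le> 2*A0*b\<^sup>2 + A0*Cc*a*b"
    by (simp add: algebra_simps power2_eq_square)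
  have sq: "- a\<^sup>2 + B*a*b \<le> B\<^sup>2 * b\<^sup>2 / 4"
  proof -
    have "0 \<le> (a - B*b/2)\<^sup>2" by simp
    then show ?thesis by (simp add: power2_eq_square algebra_simps)
  qed
  have lhs: "2 * inner G (W - (c/2)*G) + 2 * inner W ((1 + c/2) * (W - (c/2)*G)) \<le> (B\<^sup>2/4 + 2*A0) * b\<^sup>2"
    using t1 t2 sq unfolding B_def by (simp add: algebra_simps)
  have sqC: "0 \<le> Cc*Cc" by simp
  have Be: "B = 2 + Cc + Cc*Cc/2" by (simp add: B_def A0_def algebra_simps)
  have xe: "3 + Cc + Cc*Cc \<le> x" using x by (simp add: power2_eq_square)
  have Bx: "B \<le> x" using Be xe sqC by linarith
  have x1: "x \<ge> 1" using xe sqC C1 by linarith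
  have B0: "B \<ge> 0" unfolding B_def A0_def using C1 by simp
  have Ax: "A0 \<le> x" unfolding A0_def using xe sqC C1 by linarith
  have "B\<^sup>2 \<le> x\<^sup>2" using Bx B0 by (simp add: power_mono)
  moreover have "x \<le> x\<^sup>2" using x1 by (simp add: power2_eq_square)
  ultimately have "B\<^sup>2/4 + 2*A0 \<le> 4 * x\<^sup>2" using Ax zero_le_power2[of x] by linarith
  then have "(B\<^sup>2/4 + 2*A0) * b\<^sup>2 \<le> 4 * x\<^sup>2 * b\<^sup>2" by (intro mult_right_mono) auto
  with lhs show ?thesis unfolding b_def by linarith
qed



lemma inner_ofreal_right: "inner u (complex_of_real r * v) = r * inner u v"
  by (simp add: scaleR_conv_of_real[symmetric])

lemma lyap_mono:
  assumes sol: "is_sol z y y'" and c1: "0 \<le> Re z" and cC: "norm (1+z) \<le> Cc"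
    and x0: "3 + Cc + Cc\<^sup>2 \<le> x0" and xx: "x0 \<le> x"
  shows "(norm (eG y x))\<^sup>2 + (norm (eW z y y' x))\<^sup>2 \<le> (norm (eG y x0))\<^sup>2 + (norm (eW z y y' x0))\<^sup>2"
proof -
  define c where "c = 1 + z"
  define \<Phi> where "\<Phi> t = (norm (eG y t))\<^sup>2 + (norm (eW z y y' t))\<^sup>2" for t
  have Cc0: "0 \<le> Cc" using cC norm_ge_zero order_trans by blast
  have "\<Phi> x \<le> \<Phi> x0"
  proof (rule DERIV_nonpos_imp_nonincreasing[OF xx])
    fix t assume t: "x0 \<le> t" "t \<le> x"
    have tpos: "t > 0" using t x0 Cc0 by (smt (verit) zero_le_power2)
    define G where "G = eG y t"
    define W where "W = eW z y y' t"
    define V where "V = W - (c/2) * G"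
    have Wdef: "W = of_real t * eGd y y' t + (c/2) * G" unfolding W_def G_def eW_def c_def by simp
    have Gd: "eGd y y' t = of_real (1/t) * V"
    proof -
      have "V = of_real t * eGd y y' t" unfolding V_def Wdef by simp
      then show ?thesis using tpos by (simp add: field_simps)
    qed
    have D: "(\<Phi> has_real_derivative
        (2 * inner (eG y t) (eGd y y' t) + 2 * inner (eW z y y' t) ((1 + (1+z)/2) * eGd y y' t - 2 * of_real t * eW z y y' t))) (at t)"
      unfolding \<Phi>_def[abs_def] by (rule energy_deriv[OF eG_deriv[OF sol] eW_deriv[OF sol]])
    have eq: "2 * inner (eG y t) (eGd y y' t) + 2 * inner (eW z y y' t) ((1 + (1+z)/2) * eGd y y' t - 2 * of_real t * eW z y y' t)
       = (1/t) * (2 * inner G V + 2 * inner W ((1 + c/2) * V)) - 4 * t * (norm W)\<^sup>2"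
    proof -
      have i2: "inner W ((1 + c/2) * (of_real (1/t) * V)) = (1/t) * inner W ((1 + c/2) * V)"
        by (metis inner_ofreal_right mult.left_commute)
      have i3: "inner W (2 * of_real t * W) = 2 * t * (norm W)\<^sup>2"
        using inner_mult_self[of W "2 * of_real t"] by simp
      have i1: "inner G (of_real (1/t) * V) = (1/t) * inner G V" by (rule inner_ofreal_right)
      show ?thesis unfolding G_def[symmetric] W_def[symmetric] Gd c_def[symmetric] inner_diff_right i1 i2 i3
        by (simp add: algebra_simps)
    qed
    have "1 \<le> Re c" using c1 unfolding c_def by simp
    moreover have "norm c \<le> Cc" using cC unfolding c_def .
    moreover have "3 + Cc + Cc\<^sup>2 \<le> t" using x0 t by linarith
    ultimately have L: "2 * inner G V + 2 * inner W ((1 + c/2) * V) \<le> 4 * t\<^sup>2 * (norm W)\<^sup>2"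
      unfolding V_def by (rule lyap_ineq)
    have "(1/t) * (2 * inner G V + 2 * inner W ((1 + c/2) * V)) \<le> (1/t) * (4 * t\<^sup>2 * (norm W)\<^sup>2)"
      using L tpos by (intro mult_left_mono) auto
    also have "(1/t) * (4 * t\<^sup>2 * (norm W)\<^sup>2) = 4 * t * (norm W)\<^sup>2" using tpos by (simp add: power2_eq_square)
    finally have "(1/t) * (2 * inner G V + 2 * inner W ((1 + c/2) * V)) - 4 * t * (norm W)\<^sup>2 \<le> 0" by simp
    then show "\<exists>y. (\<Phi> has_real_derivative y) (at t) \<and> y \<le> 0" using D unfolding eq by blast
  qed
  then show ?thesis unfolding \<Phi>_def .
qed



lemma norm_eG: "norm (eG y x) = exp (-(x\<^sup>2)/2) * norm (y x)"
  unfolding eG_def by (simp add: norm_mult)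

lemma norm_y_eG: "norm (y x) = exp (x\<^sup>2/2) * norm (eG y x)"
  unfolding norm_eG by (simp add: exp_minus field_simps)

lemma y'_eGd: "y' x = of_real x * y x + of_real (exp (x\<^sup>2/2)) * eGd y y' x"
proof -
  have "of_real (exp (x\<^sup>2/2)) * eGd y y' x = of_real (exp (x\<^sup>2/2) * exp (-(x\<^sup>2)/2)) * (y' x - of_real x * y x)"
    unfolding eGd_def by simp
  also have "exp (x\<^sup>2/2) * exp (-(x\<^sup>2)/2) = 1" by (simp add: exp_minus field_simps)
  finally show ?thesis by simp
qed

lemma sqrt_bound: "(norm u)\<^sup>2 + (norm v)\<^sup>2 \<le> R\<^sup>2 \<Longrightarrow> 0 \<le> R \<Longrightarrow> norm u \<le> R \<and> norm v \<le> R"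
  for u v :: complex
  using power2_le_imp_le[of "norm u" R] power2_le_imp_le[of "norm v" R] zero_le_power2[of "norm u"] zero_le_power2[of "norm v"]
  by linarith

lemma sol_growth:
  fixes Z :: real
  shows "\<exists>C1>0. \<forall>z a b x. 0 \<le> Re z \<longrightarrow> norm z \<le> Z \<longrightarrow> norm a \<le> 1 \<longrightarrow> norm b \<le> 1 \<longrightarrow> 0 \<le> x \<longrightarrow>
     norm (sol z a b x) \<le> C1 * exp (x\<^sup>2/2) \<and> norm (dsol z a b x) \<le> C1 * (1 + x) * exp (x\<^sup>2/2)"
proof -
  define Cc where "Cc = \<bar>Z\<bar> + 1"
  define x0 where "x0 = 3 + Cc + Cc\<^sup>2"
  define R where "R = sqrt (2 * exp ((1 + x0\<^sup>2 + \<bar>Z\<bar>) * x0))"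
  define P where "P = R + x0 * (R + x0 * R) + Cc/2 * R"
  define C1 where "C1 = (R + P) * (1 + Cc) + 1"
  have Cc1: "Cc \<ge> 1" unfolding Cc_def by simp
  have x01: "x0 \<ge> 1" unfolding x0_def using Cc1 zero_le_power2[of Cc] by linarith
  have R0: "R \<ge> 0" unfolding R_def by simp
  have P0: "P \<ge> R" unfolding P_def using R0 x01 Cc1 by (simp add: add_increasing)
  have RP0: "0 \<le> R + P" using R0 P0 by linarith
  have pr0: "0 \<le> (R + P) * Cc" using RP0 Cc1 by simp
  have pr1: "(R + P) * (1 + Cc) = (R + P) + (R + P) * Cc" by (simp add: algebra_simps)
  have C1pos: "C1 > 0" unfolding C1_def using pr0 pr1 RP0 by linarith
  have pr2: "P * (1 + Cc) \<le> (R + P) * (1 + Cc)" using R0 Cc1 by (intro mult_right_mono) auto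
  have RC: "R \<le> C1" "P * (1 + Cc) \<le> C1" unfolding C1_def using pr0 pr1 pr2 P0 R0 by linarith+
  show ?thesis
  proof (rule exI[of _ C1], intro conjI[OF C1pos] allI impI)
    fix z a b :: complex and x :: real
    assume z0: "0 \<le> Re z" and zZ: "norm z \<le> Z" and a: "norm a \<le> 1" and b: "norm b \<le> 1" and x: "0 \<le> x"
    define y where "y = sol z a b"
    define y' where "y' = dsol z a b"
    have sol: "is_sol z y y'" unfolding y_def y'_def by (rule is_sol_sol)
    have y0: "y 0 = a" "y' 0 = b" unfolding y_def y'_def by (simp_all add: sol_0 dsol_0)
    have e1: "exp (t\<^sup>2/2) \<ge> 1" for t :: real by simp
    have small: "norm (y t) \<le> R \<and> norm (y' t) \<le> R" if t: "0 \<le> t" "t \<le> x0" for t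
    proof (rule sqrt_bound[OF _ R0])
      have "(norm (y t))\<^sup>2 + (norm (y' t))\<^sup>2 \<le> ((norm a)\<^sup>2 + (norm b)\<^sup>2) * exp ((1 + t\<^sup>2 + norm z) * \<bar>t\<bar>)"
        using energy_growth[OF sol, of t] y0 by simp
      also have "\<dots> \<le> 2 * exp ((1 + x0\<^sup>2 + \<bar>Z\<bar>) * x0)"
      proof (rule mult_mono)
        show "(norm a)\<^sup>2 + (norm b)\<^sup>2 \<le> 2"
          using power_le_one[OF norm_ge_zero a, of 2] power_le_one[OF norm_ge_zero b, of 2] by linarith
        have "t\<^sup>2 \<le> x0\<^sup>2" using t by (intro power_mono) auto
        moreover have "norm z \<le> \<bar>Z\<bar>" using zZ by simp
        ultimately have "1 + t\<^sup>2 + norm z \<le> 1 + x0\<^sup>2 + \<bar>Z\<bar>" by simp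
        moreover have "0 \<le> 1 + t\<^sup>2 + norm z" using zero_le_power2[of t] norm_ge_zero[of z] by linarith
        ultimately have "(1 + t\<^sup>2 + norm z) * \<bar>t\<bar> \<le> (1 + x0\<^sup>2 + \<bar>Z\<bar>) * x0"
          using t by (intro mult_mono) auto
        then show "exp ((1 + t\<^sup>2 + norm z) * \<bar>t\<bar>) \<le> exp ((1 + x0\<^sup>2 + \<bar>Z\<bar>) * x0)" by simp
      qed auto
      also have "\<dots> = R\<^sup>2" unfolding R_def by simp
      finally show "(norm (y t))\<^sup>2 + (norm (y' t))\<^sup>2 \<le> R\<^sup>2" .
    qed
    show "norm (sol z a b x) \<le> C1 * exp (x\<^sup>2/2) \<and> norm (dsol z a b x) \<le> C1 * (1 + x) * exp (x\<^sup>2/2)"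
    proof (cases "x \<le> x0")
      case True
      from small[OF x True] have s: "norm (y x) \<le> R" "norm (y' x) \<le> R" by auto
      have "C1 * 1 \<le> C1 * exp (x\<^sup>2/2)" using C1pos e1[of x] by (intro mult_left_mono) auto
      then have "R \<le> C1 * exp (x\<^sup>2/2)" using RC(1) by linarith
      moreover have "R \<le> C1 * (1 + x) * exp (x\<^sup>2/2)"
      proof -
        have "1 * 1 \<le> (1 + x) * exp (x\<^sup>2/2)" using x e1[of x] by (intro mult_mono) auto
        then have "C1 * 1 \<le> C1 * ((1 + x) * exp (x\<^sup>2/2))" using C1pos by (intro mult_left_mono) auto
        then show ?thesis using RC(1) by (simp add: mult.assoc)
      qed
      ultimately show ?thesis using s unfolding y_def y'_def by linarith
    next
      case False
      then have xx0: "x0 \<le> x" by simp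
      have cC: "norm (1 + z) \<le> Cc" unfolding Cc_def using zZ norm_triangle_ineq[of 1 z] by simp
      have mono: "(norm (eG y x))\<^sup>2 + (norm (eW z y y' x))\<^sup>2 \<le> (norm (eG y x0))\<^sup>2 + (norm (eW z y y' x0))\<^sup>2"
        by (rule lyap_mono[OF sol z0 cC _ xx0]) (simp add: x0_def)
      from small[of x0] x01 have s0: "norm (y x0) \<le> R" "norm (y' x0) \<le> R" by auto
      have "exp (-(x0\<^sup>2)/2) * norm (y x0) \<le> norm (y x0)" by (rule mult_left_le_one_le) auto
      then have G0: "norm (eG y x0) \<le> R" unfolding norm_eG using s0 by linarith
      have Gd0: "norm (eGd y y' x0) \<le> R + x0 * R"
      proof -
        have "norm (eGd y y' x0) = exp (-(x0\<^sup>2)/2) * norm (y' x0 - of_real x0 * y x0)"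
          unfolding eGd_def by (simp add: norm_mult)
        also have "\<dots> \<le> norm (y' x0 - of_real x0 * y x0)"
          by (rule mult_left_le_one_le) auto
        also have "\<dots> \<le> norm (y' x0) + x0 * norm (y x0)"
          using norm_triangle_ineq4[of "y' x0" "of_real x0 * y x0"] x01 by (simp add: norm_mult)
        also have "\<dots> \<le> R + x0 * R" using s0 x01 by (intro add_mono mult_left_mono) auto
        finally show ?thesis .
      qed
      have W0: "norm (eW z y y' x0) \<le> x0 * (R + x0 * R) + Cc/2 * R"
      proof -
        have "norm (eW z y y' x0) \<le> norm (of_real x0 * eGd y y' x0) + norm ((1+z)/2 * eG y x0)"
          unfolding eW_def by (rule norm_triangle_ineq)
        also have "\<dots> = x0 * norm (eGd y y' x0) + norm (1+z)/2 * norm (eG y x0)"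
          using x01 by (simp add: norm_mult norm_divide)
        also have "\<dots> \<le> x0 * (R + x0 * R) + Cc/2 * R"
          using Gd0 G0 x01 cC Cc1 by (intro add_mono mult_left_mono mult_mono) auto
        finally show ?thesis .
      qed
      have "(norm (eG y x0))\<^sup>2 + (norm (eW z y y' x0))\<^sup>2 \<le> (norm (eG y x0) + norm (eW z y y' x0))\<^sup>2"
        by (simp add: power2_sum)
      also have "\<dots> \<le> P\<^sup>2"
      proof (rule power_mono)
        show "norm (eG y x0) + norm (eW z y y' x0) \<le> P" unfolding P_def using G0 W0 by linarith
      qed simp
      finally have "(norm (eG y x))\<^sup>2 + (norm (eW z y y' x))\<^sup>2 \<le> P\<^sup>2" using mono by linarith
      then have GW: "norm (eG y x) \<le> P" "norm (eW z y y' x) \<le> P" using sqrt_bound R0 P0 by auto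
      have x1: "x \<ge> 1" using xx0 x01 by linarith
      have ybound: "norm (y x) \<le> P * exp (x\<^sup>2/2)"
      proof -
        have "norm (y x) = exp (x\<^sup>2/2) * norm (eG y x)" by (rule norm_y_eG)
        also have "\<dots> \<le> exp (x\<^sup>2/2) * P" using GW(1) by (intro mult_left_mono) auto
        finally show ?thesis by (simp add: mult.commute)
      qed
      have xGd: "x * norm (eGd y y' x) \<le> P + Cc/2 * P"
      proof -
        have "of_real x * eGd y y' x = eW z y y' x - (1+z)/2 * eG y x" unfolding eW_def by simp
        then have "x * norm (eGd y y' x) = norm (eW z y y' x - (1+z)/2 * eG y x)"
          using x by (metis abs_of_nonneg norm_mult norm_of_real)
        also have "\<dots> \<le> norm (eW z y y' x) + norm (1+z)/2 * norm (eG y x)"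
          using norm_triangle_ineq4[of "eW z y y' x" "(1+z)/2 * eG y x"] by (simp add: norm_mult norm_divide)
        also have "\<dots> \<le> P + Cc/2 * P" using GW cC Cc1 by (intro add_mono mult_mono) auto
        finally show ?thesis .
      qed
      have Gdb: "norm (eGd y y' x) \<le> P + Cc/2 * P"
      proof -
        have "norm (eGd y y' x) \<le> x * norm (eGd y y' x)" using x1 by (simp add: mult_le_cancel_right1)
        then show ?thesis using xGd by linarith
      qed
      have "norm (y' x) \<le> x * norm (y x) + exp (x\<^sup>2/2) * norm (eGd y y' x)"
        using norm_triangle_ineq[of "of_real x * y x" "of_real (exp (x\<^sup>2/2)) * eGd y y' x"] x
        unfolding y'_eGd[of y' x y, symmetric] by (simp add: norm_mult)
      also have "\<dots> \<le> x * (P * exp (x\<^sup>2/2)) + exp (x\<^sup>2/2) * (P + Cc/2 * P)"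
        using ybound Gdb x by (intro add_mono mult_left_mono) auto
      also have "\<dots> \<le> P * (1 + Cc) * (1 + x) * exp (x\<^sup>2/2)"
      proof -
        have "x * (P * exp (x\<^sup>2/2)) + exp (x\<^sup>2/2) * (P + Cc/2 * P) = P * exp (x\<^sup>2/2) * (x + 1 + Cc/2)"
          by (simp add: algebra_simps)
        also have "\<dots> \<le> P * exp (x\<^sup>2/2) * ((1 + Cc) * (1 + x))"
        proof (rule mult_left_mono)
          have "0 \<le> Cc * x" using x Cc1 by simp
          moreover have "(1 + Cc) * (1 + x) = 1 + x + Cc + Cc * x" by (simp add: algebra_simps)
          ultimately show "x + 1 + Cc/2 \<le> (1 + Cc) * (1 + x)" using Cc1 by linarith
          show "0 \<le> P * exp (x\<^sup>2/2)" using P0 R0 by simp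
        qed
        finally show ?thesis by (simp add: algebra_simps)
      qed
      also have "\<dots> \<le> C1 * (1 + x) * exp (x\<^sup>2/2)" using RC(2) x by (intro mult_right_mono) auto
      finally have y'b: "norm (y' x) \<le> C1 * (1 + x) * exp (x\<^sup>2/2)" .
      have "norm (y x) \<le> C1 * exp (x\<^sup>2/2)"
      proof -
        have "P * 1 \<le> P * (1 + Cc)" using P0 R0 Cc1 by (intro mult_left_mono) auto
        then have "P \<le> C1" using RC(2) by linarith
        then have "P * exp (x\<^sup>2/2) \<le> C1 * exp (x\<^sup>2/2)" by (intro mult_right_mono) auto
        then show ?thesis using ybound by linarith
      qed
      then show ?thesis using y'b unfolding y_def y'_def by simp
    qed
  qed
qed



lemma S_refl: "S z a b (-\<xi>) = S z a (-b) \<xi>"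
proof -
  have "\<And>k. (-\<xi>)^k = (-1)^k * \<xi>^k" by (rule power_minus)
  then show ?thesis unfolding S_def cf_neg by (simp only: mult_ac)
qed

lemma dS_refl: "dS z a b (-\<xi>) = - dS z a (-b) \<xi>"
proof -
  have e: "diffs (cf z a (-b)) k * \<xi>^k = - (diffs (cf z a b) k * (-\<xi>)^k)" for k
  proof -
    have "(-\<xi>)^k = (-1)^k * \<xi>^k" by (rule power_minus)
    then show ?thesis by (simp add: diffs_def cf_neg mult_ac)
  qed
  have "dS z a (-b) \<xi> = (\<Sum>k. - (diffs (cf z a b) k * (-\<xi>)^k))" unfolding dS_def e ..
  also have "\<dots> = - dS z a b (-\<xi>)" unfolding dS_def by (rule suminf_minus[OF dS_summable])
  finally show ?thesis by simp
qed

lemma sol_refl: "sol z a b (-x) = sol z a (-b) x"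
  unfolding sol_def using S_refl[of z a b "of_real x"] by simp

lemma dsol_refl: "dsol z a b (-x) = - dsol z a (-b) x"
  unfolding dsol_def using dS_refl[of z a b "of_real x"] by simp

lemma S_lin: "S z a b \<xi> = a * S z 1 0 \<xi> + b * S z 0 1 \<xi>"
proof -
  have s1: "(\<lambda>k. cf z 1 0 k * \<xi>^k) sums S z 1 0 \<xi>" unfolding S_def using cf_summable summable_sums by blast
  have s2: "(\<lambda>k. cf z 0 1 k * \<xi>^k) sums S z 0 1 \<xi>" unfolding S_def using cf_summable summable_sums by blast
  have "(\<lambda>k. a * (cf z 1 0 k * \<xi>^k) + b * (cf z 0 1 k * \<xi>^k)) sums (a * S z 1 0 \<xi> + b * S z 0 1 \<xi>)"
    by (intro sums_add sums_mult s1 s2)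
  moreover have "(\<lambda>k. a * (cf z 1 0 k * \<xi>^k) + b * (cf z 0 1 k * \<xi>^k)) = (\<lambda>k. cf z a b k * \<xi>^k)"
    by (rule ext) (simp add: cf_lin[of z a b] algebra_simps)
  ultimately show ?thesis unfolding S_def by (simp add: sums_iff)
qed

lemma dS_lin: "dS z a b \<xi> = a * dS z 1 0 \<xi> + b * dS z 0 1 \<xi>"
proof -
  have s1: "(\<lambda>k. diffs (cf z 1 0) k * \<xi>^k) sums dS z 1 0 \<xi>" unfolding dS_def using dS_summable summable_sums by blast
  have s2: "(\<lambda>k. diffs (cf z 0 1) k * \<xi>^k) sums dS z 0 1 \<xi>" unfolding dS_def using dS_summable summable_sums by blast
  have "(\<lambda>k. a * (diffs (cf z 1 0) k * \<xi>^k) + b * (diffs (cf z 0 1) k * \<xi>^k)) sums (a * dS z 1 0 \<xi> + b * dS z 0 1 \<xi>)"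
    by (intro sums_add sums_mult s1 s2)
  moreover have "(\<lambda>k. a * (diffs (cf z 1 0) k * \<xi>^k) + b * (diffs (cf z 0 1) k * \<xi>^k)) = (\<lambda>k. diffs (cf z a b) k * \<xi>^k)"
    by (rule ext) (simp add: diffs_def cf_lin[of z a b] algebra_simps)
  ultimately show ?thesis unfolding dS_def by (simp add: sums_iff)
qed

lemma cf_holo: "(\<lambda>z. cf z a b k) holomorphic_on A"
proof (induction k rule: less_induct)
  case (less k)
  have "k = 0 \<or> k = 1 \<or> k = 2 \<or> k = 3 \<or> (\<exists>m. k = m + 4)" by presburger
  then consider "k = 0" | "k = 1" | "k = 2" | "k = 3" | m where "k = m + 4" by blast
  then show ?case
  proof cases
    case 1 then show ?thesis by simp
  next
    case 2 then show ?thesis by simp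
  next
    case 3
    have "(\<lambda>z. cf z a b k) = (\<lambda>z. - z * a / 2)" using 3 by (simp add: numeral_eq_Suc)
    moreover have "(\<lambda>z. - z * a / 2) holomorphic_on A"
      by (rule holomorphic_on_divide[OF holomorphic_on_mult[OF holomorphic_on_minus[OF holomorphic_on_ident] holomorphic_on_const] holomorphic_on_const]) simp
    ultimately show ?thesis by simp
  next
    case 4
    have "(\<lambda>z. cf z a b k) = (\<lambda>z. - z * b / 6)" using 4 by (simp add: numeral_eq_Suc)
    moreover have "(\<lambda>z. - z * b / 6) holomorphic_on A"
      by (rule holomorphic_on_divide[OF holomorphic_on_mult[OF holomorphic_on_minus[OF holomorphic_on_ident] holomorphic_on_const] holomorphic_on_const]) simp
    ultimately show ?thesis by simp
  next
    case 5
    have e: "(\<lambda>z. cf z a b k) = (\<lambda>z. (cf z a b m - z * cf z a b (m+2)) / of_nat ((m+4)*(m+3)))"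
      using 5 by (simp add: numeral_eq_Suc)
    have h1: "(\<lambda>z. cf z a b m) holomorphic_on A" using less 5 by simp
    have h2: "(\<lambda>z. cf z a b (m+2)) holomorphic_on A" using less 5 by simp
    have nz: "(of_nat ((m+4)*(m+3)) :: complex) \<noteq> 0" by (simp del: of_nat_mult)
    show ?thesis unfolding e
      by (rule holomorphic_on_divide[OF holomorphic_on_diff[OF h1 holomorphic_on_mult[OF holomorphic_on_ident h2]] holomorphic_on_const]) (rule nz)
  qed
qed

lemma holo_series:
  fixes c :: "complex \<Rightarrow> nat \<Rightarrow> complex"
  assumes hol: "\<And>k. (\<lambda>z. c z k) holomorphic_on UNIV"
    and bd: "\<And>k z. z \<in> cball z0 r \<Longrightarrow> norm (c z k) \<le> M k" and sm: "summable M"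
  shows "(\<lambda>z. \<Sum>k. c z k) holomorphic_on ball z0 r \<and> continuous_on (cball z0 r) (\<lambda>z. \<Sum>k. c z k)"
proof -
  have ul: "uniform_limit (cball z0 r) (\<lambda>n z. \<Sum>i<n. c z i) (\<lambda>z. \<Sum>i. c z i) sequentially"
    by (rule Weierstrass_m_test[OF bd sm])
  have ev: "eventually (\<lambda>n. continuous_on (cball z0 r) (\<lambda>z. \<Sum>i<n. c z i) \<and> (\<lambda>z. \<Sum>i<n. c z i) holomorphic_on ball z0 r) sequentially"
  proof (rule always_eventually, intro allI conjI)
    fix n
    have h: "(\<lambda>z. \<Sum>i<n. c z i) holomorphic_on UNIV" by (rule holomorphic_on_sum) (rule hol)
    show "continuous_on (cball z0 r) (\<lambda>z. \<Sum>i<n. c z i)"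
      using holomorphic_on_imp_continuous_on[OF h] continuous_on_subset by blast
    show "(\<lambda>z. \<Sum>i<n. c z i) holomorphic_on ball z0 r" using h holomorphic_on_subset by blast
  qed
  obtain "continuous_on (cball z0 r) (\<lambda>z. \<Sum>i. c z i)" "(\<lambda>z. \<Sum>i. c z i) holomorphic_on ball z0 r"
    by (rule holomorphic_uniform_limit[OF ev ul trivial_limit_sequentially])
  then show ?thesis by blast
qed

lemma cball_norm: "z \<in> cball z0 r \<Longrightarrow> 1 + norm z \<le> 1 + norm z0 + r"
  using norm_triangle_ineq2[of z z0] by (simp add: dist_norm norm_minus_commute)

lemma S_holo: "(\<lambda>z. S z a b \<xi>) holomorphic_on ball z0 r \<and> continuous_on (cball z0 r) (\<lambda>z. S z a b \<xi>)"
proof -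
  define D where "D = max (norm a) (norm b)"
  define L where "L = 1 + norm z0 + \<bar>r\<bar>"
  show ?thesis unfolding S_def
  proof (rule holo_series)
    show "(\<lambda>z. cf z a b k * \<xi>^k) holomorphic_on UNIV" for k by (rule holomorphic_on_mult[OF cf_holo holomorphic_on_const])
    show "summable (\<lambda>k. D * ((L * norm \<xi>)^k / fact (k div 2)))"
      by (intro summable_mult maj_summable) (auto simp: L_def)
    fix k z assume z: "z \<in> cball z0 r"
    have Lz: "1 + norm z \<le> L" using cball_norm[OF z] unfolding L_def by linarith
    have "norm (cf z a b k * \<xi>^k) = norm (cf z a b k) * norm \<xi> ^ k" by (simp add: norm_mult norm_power)
    also have "\<dots> \<le> D * L^k / fact (k div 2) * norm \<xi> ^ k"
      by (intro mult_right_mono cf_bound Lz) (auto simp: D_def)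
    also have "\<dots> = D * ((L * norm \<xi>)^k / fact (k div 2))" by (simp add: power_mult_distrib)
    finally show "norm (cf z a b k * \<xi>^k) \<le> D * ((L * norm \<xi>)^k / fact (k div 2))" .
  qed
qed



lemma dS_holo: "(\<lambda>z. dS z a b \<xi>) holomorphic_on ball z0 r \<and> continuous_on (cball z0 r) (\<lambda>z. dS z a b \<xi>)"
proof -
  define D where "D = max (norm a) (norm b)"
  define L where "L = 1 + norm z0 + \<bar>r\<bar>"
  have L1: "L \<ge> 1" unfolding L_def by simp
  have D0: "D \<ge> 0" unfolding D_def using norm_ge_zero[of a] by linarith
  show ?thesis unfolding dS_def
  proof (rule holo_series)
    show "(\<lambda>z. diffs (cf z a b) k * \<xi>^k) holomorphic_on UNIV" for k
      unfolding diffs_def by (rule holomorphic_on_mult[OF holomorphic_on_mult[OF holomorphic_on_const cf_holo] holomorphic_on_const])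
    show "summable (\<lambda>k. D * L * ((2 * L * norm \<xi>)^k / fact (k div 2)))"
      by (intro summable_mult maj_summable) (use L1 in auto)
    fix k z assume z: "z \<in> cball z0 r"
    have Lz: "1 + norm z \<le> L" using cball_norm[OF z] unfolding L_def by linarith
    have k2: "real (Suc k) \<le> 2^k"
    proof -
      have "Suc k \<le> 2^k" by (rule Suc_leI[OF less_exp])
      then have "real (Suc k) \<le> real (2^k)" by (rule of_nat_mono)
      then show ?thesis by simp
    qed
    have ff: "(fact (k div 2) :: real) \<le> fact (Suc k div 2)" by (rule fact_mono, rule div_le_mono) simp
    have "norm (diffs (cf z a b) k * \<xi>^k) = real (Suc k) * norm (cf z a b (Suc k)) * norm \<xi> ^ k"
      unfolding diffs_def norm_mult norm_power norm_of_nat ..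
    also have "\<dots> \<le> 2^k * (D * L^(Suc k) / fact (Suc k div 2)) * norm \<xi> ^ k"
      by (intro mult_right_mono mult_mono k2 cf_bound Lz) (auto simp: D_def)
    also have "\<dots> \<le> 2^k * (D * L^(Suc k) / fact (k div 2)) * norm \<xi> ^ k"
    proof -
      have "D * L^(Suc k) / fact (Suc k div 2) \<le> D * L^(Suc k) / fact (k div 2)"
        using ff D0 L1 by (intro divide_left_mono) auto
      then show ?thesis by (intro mult_right_mono mult_left_mono) auto
    qed
    also have "\<dots> = D * L * ((2 * L * norm \<xi>)^k / fact (k div 2))" by (simp add: power_mult_distrib)
    finally show "norm (diffs (cf z a b) k * \<xi>^k) \<le> D * L * ((2 * L * norm \<xi>)^k / fact (k div 2))" .
  qed
qed



definition Tf :: "complex \<Rightarrow> complex \<Rightarrow> complex \<Rightarrow> real \<Rightarrow> complex" where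
  "Tf z a b x = dsol z a b x - \<i> * csqrt z * sol z a b x"

lemma Theta_eq: "Theta s n M w z = Tf z (fst (u_init n w)) (snd (u_init n w)) (s * M)"
  unfolding Theta_def Tf_def u_sol_eq du_sol_eq ..

lemma Tf_lin: "Tf z a b x = a * Tf z 1 0 x + b * Tf z 0 1 x"
  unfolding Tf_def sol_def dsol_def
  using S_lin[of z a b "of_real x"] dS_lin[of z a b "of_real x"] by (simp add: algebra_simps)

lemma region:
  assumes "dist (of_nat (2*n+1)) z \<le> 9/10"
  shows "0 < Re z" "norm z \<le> real (2*n+2)"
proof -
  have "\<bar>Re (of_nat (2*n+1) - z)\<bar> \<le> norm (of_nat (2*n+1) - z)" by (rule abs_Re_le_cmod)
  then have "\<bar>real (2*n+1) - Re z\<bar> \<le> 9/10" using assms by (simp add: dist_norm)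
  then show "0 < Re z" by linarith
  have "norm z \<le> norm (of_nat (2*n+1) :: complex) + norm (z - of_nat (2*n+1))"
    using norm_triangle_ineq[of "of_nat (2*n+1)" "z - of_nat (2*n+1)"] by simp
  moreover have "norm (of_nat (2*n+1) :: complex) = real (2*n+1)" by (rule norm_of_nat)
  moreover have "norm (z - of_nat (2*n+1)) \<le> 9/10" using assms by (simp only: dist_norm norm_minus_commute)
  ultimately show "norm z \<le> real (2*n+2)" by simp
qed

lemma tri_bound: "norm (p - \<i> * q * r) \<le> norm p + norm q * norm r"
  using norm_triangle_ineq4[of p "\<i> * q * r"] by (simp add: norm_mult)

lemma T_bound:
  fixes n :: nat
  shows "\<exists>C2>0. \<forall>z a b M s. dist (of_nat (2*n+1)) z \<le> 9/10 \<longrightarrow> norm a \<le> 1 \<longrightarrow> norm b \<le> 1 \<longrightarrow> 1 \<le> M \<longrightarrow>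
     s \<in> {1, -1::real} \<longrightarrow> norm (Tf z a b (s * M)) \<le> C2 * M * exp (M\<^sup>2/2)"
proof -
  obtain C1 where C1: "C1 > 0" and H: "\<And>z a b x. 0 \<le> Re z \<Longrightarrow> norm z \<le> real (2*n+2) \<Longrightarrow> norm a \<le> 1 \<Longrightarrow> norm b \<le> 1 \<Longrightarrow> 0 \<le> x \<Longrightarrow>
     norm (sol z a b x) \<le> C1 * exp (x\<^sup>2/2) \<and> norm (dsol z a b x) \<le> C1 * (1 + x) * exp (x\<^sup>2/2)"
    using sol_growth[of "real (2*n+2)"] by blast
  define C2 where "C2 = C1 * (2 + sqrt (real (2*n+2)))"
  have C2pos: "C2 > 0" unfolding C2_def using C1 by (simp add: add_pos_nonneg)
  show ?thesis
  proof (rule exI[of _ C2], intro conjI[OF C2pos] allI impI)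
    fix z a b :: complex and M s :: real
    assume z: "dist (of_nat (2*n+1)) z \<le> 9/10" and a: "norm a \<le> 1" and b: "norm b \<le> 1"
      and M: "1 \<le> M" and s: "s \<in> {1, -1}"
    have zr: "0 \<le> Re z" "norm z \<le> real (2*n+2)" using region[OF z] by auto
    have sq: "norm (csqrt z) \<le> sqrt (real (2*n+2))" using zr(2) by simp
    have e0: "0 \<le> exp (M\<^sup>2/2)" by simp
    have key: "norm (dsol z a b' M) + norm (csqrt z) * norm (sol z a b' M) \<le> C2 * M * exp (M\<^sup>2/2)"
      if b': "norm b' \<le> 1" for b'
    proof -
      from H[OF zr a b' , of M] M have h: "norm (sol z a b' M) \<le> C1 * exp (M\<^sup>2/2)"
        "norm (dsol z a b' M) \<le> C1 * (1 + M) * exp (M\<^sup>2/2)" by auto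
      have "norm (csqrt z) * norm (sol z a b' M) \<le> sqrt (real (2*n+2)) * (C1 * exp (M\<^sup>2/2))"
        using sq h(1) by (intro mult_mono) auto
      also have "\<dots> \<le> sqrt (real (2*n+2)) * (C1 * M * exp (M\<^sup>2/2))"
        using M C1 by (intro mult_left_mono) (auto simp: mult.assoc intro!: mult_left_mono[of 1 M, simplified])
      finally have t1: "norm (csqrt z) * norm (sol z a b' M) \<le> sqrt (real (2*n+2)) * (C1 * M * exp (M\<^sup>2/2))" .
      have "C1 * (1 + M) * exp (M\<^sup>2/2) \<le> C1 * (2 * M) * exp (M\<^sup>2/2)"
        using M C1 by (intro mult_right_mono mult_left_mono) auto
      with h(2) have t2: "norm (dsol z a b' M) \<le> C1 * (2 * M) * exp (M\<^sup>2/2)" by linarith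
      have "C1 * (2 * M) * exp (M\<^sup>2/2) + sqrt (real (2*n+2)) * (C1 * M * exp (M\<^sup>2/2)) = C2 * M * exp (M\<^sup>2/2)"
        unfolding C2_def by (simp add: algebra_simps)
      then show ?thesis using t1 t2 by linarith
    qed
    from s show "norm (Tf z a b (s * M)) \<le> C2 * M * exp (M\<^sup>2/2)"
    proof
      assume "s = 1"
      then show ?thesis using key[OF b] tri_bound[of "dsol z a b M" "csqrt z" "sol z a b M"]
        unfolding Tf_def by simp
    next
      assume "s \<in> {-1}"
      then have s1: "s = -1" by simp
      have nb: "norm (-b) \<le> 1" using b by simp
      have "Tf z a b (s * M) = - dsol z a (-b) M - \<i> * csqrt z * sol z a (-b) M"
        unfolding Tf_def s1 using sol_refl[of z a b M] dsol_refl[of z a b M] by simp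
      also have "norm \<dots> \<le> norm (dsol z a (-b) M) + norm (csqrt z) * norm (sol z a (-b) M)"
        using tri_bound[of "- dsol z a (-b) M" "csqrt z" "sol z a (-b) M"] by simp
      finally show ?thesis using key[OF nb] by linarith
    qed
  qed
qed

lemma Tf_holo:
  assumes "cball z0 r \<subseteq> {z. 0 < Re z}"
  shows "(\<lambda>z. Tf z a b x) holomorphic_on ball z0 r \<and> continuous_on (cball z0 r) (\<lambda>z. Tf z a b x)"
proof -
  have sub: "cball z0 r \<subseteq> - \<real>\<^sub>\<le>\<^sub>0" using assms by (auto simp: complex_nonpos_Reals_iff)
  have cs: "csqrt holomorphic_on cball z0 r" by (rule holomorphic_on_subset[OF holomorphic_on_csqrt sub])
  have csb: "csqrt holomorphic_on ball z0 r" using cs ball_subset_cball holomorphic_on_subset by blast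
  have S: "(\<lambda>z. S z a b (of_real x)) holomorphic_on ball z0 r" "continuous_on (cball z0 r) (\<lambda>z. S z a b (of_real x))"
    using S_holo by blast+
  have dS: "(\<lambda>z. dS z a b (of_real x)) holomorphic_on ball z0 r" "continuous_on (cball z0 r) (\<lambda>z. dS z a b (of_real x))"
    using dS_holo by blast+
  have h: "(\<lambda>z. dS z a b (of_real x) - \<i> * csqrt z * S z a b (of_real x)) holomorphic_on ball z0 r"
    by (rule holomorphic_on_diff[OF dS(1) holomorphic_on_mult[OF holomorphic_on_mult[OF holomorphic_on_const csb] S(1)]])
  have c: "continuous_on (cball z0 r) (\<lambda>z. dS z a b (of_real x) - \<i> * csqrt z * S z a b (of_real x))"
    by (intro continuous_on_diff continuous_on_mult continuous_on_const dS(2) S(2) holomorphic_on_imp_continuous_on[OF cs])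
  show ?thesis unfolding Tf_def sol_def dsol_def using h c by blast
qed

lemma cauchy_use:
  assumes hf: "f holomorphic_on ball z r \<and> continuous_on (cball z r) f" and r: "0 < r" and k: "0 < k"
    and bd: "\<And>w. w \<in> ball z r \<Longrightarrow> norm (f w) \<le> B"
  shows "norm ((deriv ^^ k) f z) \<le> fact k * (B + 1) / r^k"
proof (rule Cauchy_higher_deriv_bound[of f z r 0])
  show "f holomorphic_on ball z r" "continuous_on (cball z r) f" using hf by auto
  show "f w \<in> ball 0 (B + 1)" if "w \<in> ball z r" for w using bd[OF that] by simp
qed (use r k in auto)



lemma u_init_bound: "norm w \<le> 1 \<Longrightarrow> norm (fst (u_init n w)) \<le> 1 \<and> norm (snd (u_init n w)) \<le> 1"
  unfolding u_init_def by auto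

lemma Theta_affine: "\<exists>P R. (\<lambda>w. Theta s n M w z) = (\<lambda>w. P + w * R) \<and>
   R = (if even n then Tf z 0 1 (s*M) else - Tf z 1 0 (s*M))"
proof (cases "even n")
  case True
  have "Theta s n M w z = Tf z 1 0 (s*M) + w * Tf z 0 1 (s*M)" for w
    using Tf_lin[of z 1 w "s*M"] by (simp add: Theta_eq u_init_def True)
  then have "(\<lambda>w. Theta s n M w z) = (\<lambda>w. Tf z 1 0 (s*M) + w * Tf z 0 1 (s*M))" by (rule ext)
  then show ?thesis using True by auto
next
  case False
  have "Theta s n M w z = Tf z 0 1 (s*M) + w * (- Tf z 1 0 (s*M))" for w
    using Tf_lin[of z "-w" 1 "s*M"] by (simp add: Theta_eq u_init_def False)
  then have "(\<lambda>w. Theta s n M w z) = (\<lambda>w. Tf z 0 1 (s*M) + w * (- Tf z 1 0 (s*M)))" by (rule ext)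
  then show ?thesis using False by auto
qed

lemma deriv_affine: "deriv (\<lambda>w. P + w * R) = (\<lambda>w. R)" for P R :: complex
proof (rule ext)
  fix w :: complex
  have "((\<lambda>w. P + w * R) has_field_derivative R) (at w)"
    by (auto intro!: derivative_eq_intros)
  then show "deriv (\<lambda>w. P + w * R) w = R" by (rule DERIV_imp_deriv)
qed

lemma rho_bound:
  assumes M: "1 \<le> M"
  shows "M powr (- real (n + 2)) * exp (- M\<^sup>2 / 2) \<le> 2/3"
proof -
  have "1 \<le> M powr real (n+2)" using M by (intro ge_one_powr_ge_zero) auto
  then have p1: "M powr (- real (n + 2)) \<le> 1" unfolding powr_minus
    using le_imp_inverse_le[of 1 "M powr real (n+2)"] by simp
  have "1 \<le> M\<^sup>2" using M by (simp add: one_le_power)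
  then have "exp (- M\<^sup>2 / 2) \<le> exp (- 1/2)" by simp
  also have "exp (- 1/2 :: real) = inverse (exp (1/2))" by (simp add: exp_minus[symmetric])
  also have "\<dots> \<le> inverse (3/2)"
  proof (rule le_imp_inverse_le)
    show "3/2 \<le> exp (1/2::real)" using exp_ge_add_one_self[of "1/2::real"] by simp
  qed simp
  finally have p2: "exp (- M\<^sup>2 / 2) \<le> 2/3" by simp
  have "M powr (- real (n + 2)) * exp (- M\<^sup>2 / 2) \<le> 1 * (2/3)"
    using p1 p2 by (intro mult_mono) auto
  then show ?thesis by simp
qed

theorem lemma8p2:
  fixes n :: nat
  shows "\<exists>C>0. \<forall>M\<ge>1. \<forall>s\<in>{1, -1::real}.
    norm (deriv (\<lambda>z. Theta s n M 0 z) (of_nat (2 * n + 1))) \<le> C * M ^ (n + 1) * exp (M\<^sup>2 / 2) \<and>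
    norm (deriv (\<lambda>w. Theta s n M w (of_nat (2 * n + 1))) 0) \<le> C * M ^ (n + 1) * exp (M\<^sup>2 / 2) \<and>
    (\<forall>(w, z)\<in>Omega M n.
       norm ((deriv ^^ 2) (\<lambda>z'. Theta s n M w z') z) \<le> C * M ^ (n + 1) * exp (M\<^sup>2 / 2) \<and>
       norm ((deriv ^^ 2) (\<lambda>w'. Theta s n M w' z) w) \<le> C * M ^ (n + 1) * exp (M\<^sup>2 / 2))"
proof -
  obtain C2 where C2: "C2 > 0" and TB: "\<And>z a b M s. dist (of_nat (2*n+1)) z \<le> 9/10 \<Longrightarrow> norm a \<le> 1 \<Longrightarrow>
      norm b \<le> 1 \<Longrightarrow> 1 \<le> M \<Longrightarrow> s \<in> {1, -1::real} \<Longrightarrow> norm (Tf z a b (s * M)) \<le> C2 * M * exp (M\<^sup>2/2)"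
    using T_bound[of n] by blast
  define C where "C = 50 * (C2 + 1)"
  have Cpos: "C > 0" unfolding C_def using C2 by simp
  define E :: complex where "E = of_nat (2 * n + 1)"
  have regE: "cball z0 r \<subseteq> {z. 0 < Re z}" if "dist E z0 + r \<le> 9/10" for z0 r
  proof
    fix z assume "z \<in> cball z0 r"
    then have "dist z0 z \<le> r" by simp
    then have "dist E z \<le> 9/10" using that dist_triangle[of E z z0] by linarith
    then show "z \<in> {z. 0 < Re z}" using region(1)[of n z] unfolding E_def by simp
  qed
  show ?thesis
  proof (rule exI[of _ C], intro conjI[OF Cpos] allI impI ballI)
    fix M s :: real
    assume M: "1 \<le> M" and s: "s \<in> {1, -1::real}"
    define Q where "Q = M ^ (n + 1) * exp (M\<^sup>2 / 2)"
    define B where "B = C2 * M * exp (M\<^sup>2 / 2)"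
    have e1: "1 \<le> exp (M\<^sup>2 / 2)" by simp
    have MQ: "M \<le> M ^ (n+1)" using power_increasing[of 1 "n+1" M] M by simp
    have "M * exp (M\<^sup>2 / 2) \<le> Q" unfolding Q_def using MQ by (intro mult_right_mono) auto
    then have "C2 * (M * exp (M\<^sup>2 / 2)) \<le> C2 * Q" using C2 by (intro mult_left_mono) auto
    moreover have "1 \<le> Q"
    proof -
      have "1 * 1 \<le> M ^ (n+1) * exp (M\<^sup>2 / 2)" using one_le_power[of M "n+1"] M e1 by (intro mult_mono) auto
      then show ?thesis unfolding Q_def by simp
    qed
    ultimately have BQ: "B + 1 \<le> (C2 + 1) * Q" unfolding B_def by (simp add: algebra_simps)
    have Q0: "0 \<le> Q" using \<open>1 \<le> Q\<close> by simp
    have B0: "0 \<le> B" unfolding B_def using C2 M by simp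
    have CQ: "k * (C2 + 1) * Q \<le> C * Q" if "k \<le> 50" "0 \<le> k" for k :: real
      unfolding C_def using that C2 Q0 by (intro mult_right_mono) auto
    have main1: "norm (deriv (\<lambda>z. Theta s n M 0 z) E) \<le> C * Q"
    proof -
      define f where "f = (\<lambda>z. Tf z (fst (u_init n 0)) (snd (u_init n 0)) (s * M))"
      have fe: "(\<lambda>z. Theta s n M 0 z) = f" unfolding f_def by (rule ext) (simp add: Theta_eq)
      have ab: "norm (fst (u_init n 0)) \<le> 1" "norm (snd (u_init n 0)) \<le> 1" using u_init_bound[of 0 n] by auto
      have hol: "f holomorphic_on ball E (1/5) \<and> continuous_on (cball E (1/5)) f"
        unfolding f_def by (rule Tf_holo[OF regE]) simp
      have "norm ((deriv ^^ 1) f E) \<le> fact 1 * (B + 1) / (1/5)^1"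
      proof (rule cauchy_use[OF hol])
        fix w assume "w \<in> ball E (1/5)"
        then have "dist E w \<le> 9/10" by simp
        then show "norm (f w) \<le> B" unfolding f_def B_def E_def by (rule TB[OF _ ab M s])
      qed auto
      then have "norm (deriv f E) \<le> 5 * (B + 1)" by simp
      also have "\<dots> \<le> 5 * ((C2 + 1) * Q)" using BQ by simp
      also have "\<dots> \<le> C * Q" using CQ[of 5] by (simp add: algebra_simps)
      finally show ?thesis unfolding fe .
    qed
    have main2: "norm (deriv (\<lambda>w. Theta s n M w E) 0) \<le> C * Q"
    proof -
      obtain P R where PR: "(\<lambda>w. Theta s n M w E) = (\<lambda>w. P + w * R)"
        and R: "R = (if even n then Tf E 0 1 (s*M) else - Tf E 1 0 (s*M))"
        using Theta_affine by blast
      have dE: "dist (of_nat (2*n+1)) E \<le> 9/10" unfolding E_def by simp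
      have t01: "norm (Tf E 0 1 (s*M)) \<le> B" unfolding B_def by (rule TB[OF dE _ _ M s]) auto
      have t10: "norm (Tf E 1 0 (s*M)) \<le> B" unfolding B_def by (rule TB[OF dE _ _ M s]) auto
      have "norm R \<le> B" using t01 t10 unfolding R by (cases "even n") simp_all
      then have "norm (deriv (\<lambda>w. Theta s n M w E) 0) \<le> B" unfolding PR deriv_affine by simp
      also have "B \<le> (C2 + 1) * Q" using BQ by linarith
      also have "\<dots> \<le> C * Q" using CQ[of 1] by (simp add: algebra_simps)
      finally show ?thesis .
    qed
    have main3: "norm ((deriv ^^ 2) (\<lambda>z'. Theta s n M w z') z) \<le> C * Q \<and>
       norm ((deriv ^^ 2) (\<lambda>w'. Theta s n M w' z) w) \<le> C * Q" if wz: "(w, z) \<in> Omega M n" for w z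
    proof
      define \<rho> where "\<rho> = M powr (- real (n + 2)) * exp (- M\<^sup>2 / 2)"
      have \<rho>: "\<rho> \<le> 2/3" unfolding \<rho>_def by (rule rho_bound[OF M])
      have "dist (eta n) (w, z) \<le> \<rho>" using wz unfolding Omega_def \<rho>_def by simp
      then have dw: "dist 0 w \<le> \<rho>" and dz: "dist E z \<le> \<rho>"
        using dist_fst_le[of "eta n" "(w,z)"] dist_snd_le[of "eta n" "(w,z)"]
        unfolding eta_def E_def by auto
      have nw: "norm w \<le> 1" using dw \<rho> by simp
      have ab: "norm (fst (u_init n w)) \<le> 1" "norm (snd (u_init n w)) \<le> 1" using u_init_bound[OF nw] by auto
      define f where "f = (\<lambda>z'. Tf z' (fst (u_init n w)) (snd (u_init n w)) (s * M))"
      have fe: "(\<lambda>z'. Theta s n M w z') = f" unfolding f_def by (rule ext) (simp add: Theta_eq)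
      have hol: "f holomorphic_on ball z (1/5) \<and> continuous_on (cball z (1/5)) f"
        unfolding f_def by (rule Tf_holo[OF regE]) (use dz \<rho> in simp)
      have "norm ((deriv ^^ 2) f z) \<le> fact 2 * (B + 1) / (1/5)^2"
      proof (rule cauchy_use[OF hol])
        fix v assume "v \<in> ball z (1/5)"
        then have "dist z v \<le> 1/5" by simp
        then have "dist E v \<le> 9/10" using dz \<rho> dist_triangle[of E v z] by linarith
        then show "norm (f v) \<le> B" unfolding f_def B_def E_def by (rule TB[OF _ ab M s])
      qed auto
      moreover have "fact 2 * (B + 1) / (1/5::real)^2 = 50 * (B + 1)" by (simp add: fact_numeral power2_eq_square)
      ultimately have "norm ((deriv ^^ 2) f z) \<le> 50 * (B + 1)" by simp
      also have "\<dots> \<le> 50 * ((C2 + 1) * Q)" using BQ by simp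
      also have "\<dots> \<le> C * Q" using CQ[of 50] by (simp add: algebra_simps)
      finally show "norm ((deriv ^^ 2) (\<lambda>z'. Theta s n M w z') z) \<le> C * Q" unfolding fe .
      obtain P R where PR: "(\<lambda>w. Theta s n M w z) = (\<lambda>w. P + w * R)"
        using Theta_affine by blast
      have "(deriv ^^ 2) (\<lambda>w'. Theta s n M w' z) = (\<lambda>w. 0)"
        unfolding PR by (simp add: numeral_2_eq_2 deriv_affine)
      then show "norm ((deriv ^^ 2) (\<lambda>w'. Theta s n M w' z) w) \<le> C * Q" using Cpos Q0 by simp
    qed
    show "norm (deriv (\<lambda>z. Theta s n M 0 z) (of_nat (2 * n + 1))) \<le> C * M ^ (n + 1) * exp (M\<^sup>2 / 2) \<and>
      norm (deriv (\<lambda>w. Theta s n M w (of_nat (2 * n + 1))) 0) \<le> C * M ^ (n + 1) * exp (M\<^sup>2 / 2) \<and>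
      (\<forall>(w, z)\<in>Omega M n.
        norm ((deriv ^^ 2) (\<lambda>z'. Theta s n M w z') z) \<le> C * M ^ (n + 1) * exp (M\<^sup>2 / 2) \<and>
        norm ((deriv ^^ 2) (\<lambda>w'. Theta s n M w' z) w) \<le> C * M ^ (n + 1) * exp (M\<^sup>2 / 2))"
      using main1 main2 main3 unfolding E_def Q_def by (auto simp: mult.assoc)
  qed
qed


end
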